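(* Let $l\geq 0$ and $d\geq 1$ be integers and let $\boldsymbol{\varepsilon}=(\varepsilon_n)_{n\geq 0}$ be a sequence of non-constant polynomials in $\mathbb{F}_2[t]$ which is ultimately periodic of type $(l,d)$, i.e. $\varepsilon_{n+d}=\varepsilon_n$ for all $n\geq l$. Let $\mathbf{s}(\boldsymbol{\varepsilon})=(s_i)_{i\geq 0}$ be the associated sequence and $\alpha=[s_0,s_1,s_2,\dots]\in\mathbb{F}_2((1/t))$ the associated continued fraction (see context). Then there is a polynomial $P\in \mathbb{F}_2(\boldsymbol{\varepsilon})[x]$ with $\deg_x P=2^d$ and $P(\alpha)=0$. More precisely, setting $\beta=1/\alpha$, there exist $d+1$ elements $A$ and $B_k$ ($0\leq k\leq d-1$) of $\mathbb{F}_2(\boldsymbol{\varepsilon})$ such that $$\beta^{2^d}=A+\sum_{k=0}^{d-1}B_k\,\beta^{2^k}.$$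
   Context: Given a sequence $\boldsymbol{\varepsilon}=(\varepsilon_n)_{n\geq 0}$, define words $W_0=$ empty word and $W_{n+1}=W_n\,\varepsilon_n\,W_n$ (concatenation) for $n\geq 0$; $W_{n+1}$ begins with $W_n$, and $\mathbf{s}(\boldsymbol{\varepsilon})$ is the infinite word beginning with every $W_n$, i.e. $\mathbf{s}(\boldsymbol{\varepsilon})=\varepsilon_0\varepsilon_1\varepsilon_0\varepsilon_2\varepsilon_0\varepsilon_1\varepsilon_0\varepsilon_3\cdots$. When the $\varepsilon_n$ are non-constant polynomials in $\mathbb{F}_2[t]$, $\alpha=CF(\mathbf{s}(\boldsymbol{\varepsilon}))=[s_0,s_1,\dots]=s_0+1/(s_1+1/(s_2+\cdots))$ is the infinite continued fraction in the field $\mathbb{F}_2((1/t))$ of formal Laurent series in $1/t$ with partial quotients $s_i$. For $\boldsymbol{\varepsilon}$ of type $(l,d)$, $\mathbb{F}_2(\boldsymbol{\varepsilon})$ denotes the subfield of $\mathbb{F}_2(t)$ generated by $\varepsilon_0,\dots,\varepsilon_{l+d-1}$. *)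

theory Defs
  imports "HOL-Computational_Algebra.Computational_Algebra" "HOL-Library.Z2"
begin

text \<open>F_2 is the type bit.  F_2((1/t)) is modelled as bit fls (formal Laurent series
  in X = 1/t, finitely many negative powers of X); the metric topology on fls is the
  (1/t)-adic topology.  The variable t is fls_X_inv.\<close>

definition laurent_of_poly :: "bit poly \<Rightarrow> bit fls" where
  "laurent_of_poly p = poly (map_poly fls_const p) fls_X_inv"

fun W :: "(nat \<Rightarrow> 'a) \<Rightarrow> nat \<Rightarrow> 'a list" where
  "W e 0 = []"
| "W e (Suc n) = W e n @ [e n] @ W e n"

text \<open>The infinite word s(eps) beginning with every W_n (length W_(i+1) = 2^(i+1)-1 > i).\<close>
definition sword :: "(nat \<Rightarrow> 'a) \<Rightarrow> nat \<Rightarrow> 'a" where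
  "sword e i = W e (Suc i) ! i"

fun cf_fin :: "(nat \<Rightarrow> 'a::field) \<Rightarrow> nat \<Rightarrow> nat \<Rightarrow> 'a" where
  "cf_fin a i 0 = a i"
| "cf_fin a i (Suc k) = a i + inverse (cf_fin a (Suc i) k)"

definition is_CF :: "'a::{field,metric_space} \<Rightarrow> (nat \<Rightarrow> 'a) \<Rightarrow> bool" where
  "is_CF \<alpha> a \<longleftrightarrow> (\<lambda>n. cf_fin a 0 n) \<longlonglongrightarrow> \<alpha>"

definition is_subfield :: "'a::field set \<Rightarrow> bool" where
  "is_subfield K \<longleftrightarrow> 0 \<in> K \<and> 1 \<in> K \<and> (\<forall>x\<in>K. \<forall>y\<in>K. x + y \<in> K \<and> x * y \<in> K)
     \<and> (\<forall>x\<in>K. - x \<in> K \<and> inverse x \<in> K)"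

definition gen_subfield :: "'a::field set \<Rightarrow> 'a set" where
  "gen_subfield S = \<Inter>{K. is_subfield K \<and> S \<subseteq> K}"

end

theory Submission
  imports Defs
begin

lemma two_fls: "(2::bit fls) = 0"
proof -
  have "(2::bit fls) = 1 + 1" by simp
  also have "(1::bit fls) + 1 = fls_const 1 + fls_const 1" by simp
  also have "fls_const (1::bit) + fls_const 1 = fls_const (1+1)" by (rule fls_plus_const)
  also have "fls_const (1+1::bit) = 0" by simp
  finally show ?thesis .
qed
lemma add_self_fls: "(x::bit fls) + x = 0"
proof -
  have "x + x = 2 * x" by (rule mult_2[symmetric])
  then show ?thesis by (simp add: two_fls)
qed
lemma neg_fls: "- (x::bit fls) = x"
  by (rule minus_unique) (rule add_self_fls)
lemma minus_fls: "(x::bit fls) - y = x + y"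
  by (simp only: diff_conv_add_uminus neg_fls)
lemma sq_add_fls: "((x::bit fls) + y)^2 = x^2 + y^2"
proof -
  have "(x + y)^2 = x^2 + y^2 + 2 * x * y" by (rule power2_sum)
  then show ?thesis by (simp add: two_fls)
qed

lemma laurent_nz:
  "p \<noteq> 0 \<Longrightarrow> laurent_of_poly p \<noteq> 0 \<and> fls_subdegree (laurent_of_poly p) = - int (degree p)"
proof (induction p rule: pCons_induct)
  case 0 then show ?case by simp
next
  case (pCons a p)
  have L: "laurent_of_poly (pCons a p) = fls_const a + fls_X_inv * laurent_of_poly p"
    by (simp add: laurent_of_poly_def map_poly_pCons)
  show ?case
  proof (cases "p = 0")
    case True
    then have "a \<noteq> 0" using pCons by auto
    have l0: "laurent_of_poly 0 = 0" by (simp add: laurent_of_poly_def)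
    have "laurent_of_poly (pCons a p) = fls_const a" using L True l0 by simp
    moreover have "fls_const a \<noteq> 0" using \<open>a \<noteq> 0\<close> by (metis fls_const_nonzero)
    ultimately show ?thesis using True by simp
  next
    case False
    then have ih: "laurent_of_poly p \<noteq> 0" "fls_subdegree (laurent_of_poly p) = - int (degree p)"
      using pCons by auto
    have nz: "fls_X_inv * laurent_of_poly p \<noteq> 0" using ih by simp
    have sd: "fls_subdegree (fls_X_inv * laurent_of_poly p) = - int (degree p) - 1"
      using ih by (simp add: fls_subdegree_mult_fls_X_inv)
    have "fls_subdegree (fls_const a + fls_X_inv * laurent_of_poly p) = - int (degree p) - 1"
      by (subst fls_subdegree_add_eq2) (use nz sd in auto)
    moreover have "fls_const a + fls_X_inv * laurent_of_poly p \<noteq> 0"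
    proof
      assume "fls_const a + fls_X_inv * laurent_of_poly p = 0"
      with calculation show False by simp
    qed
    moreover have "degree (pCons a p) = Suc (degree p)" using False by simp
    ultimately show ?thesis unfolding L by linarith
  qed
qed

section \<open>subfields\<close>

lemma gen_subfield_sub: "is_subfield (gen_subfield S)"
  unfolding gen_subfield_def is_subfield_def by auto

lemma gen_subfield_gen: "S \<subseteq> gen_subfield S"
  unfolding gen_subfield_def by auto

lemma sf_0: "is_subfield K \<Longrightarrow> 0 \<in> K" and sf_1: "is_subfield K \<Longrightarrow> 1 \<in> K"
  and sf_add: "is_subfield K \<Longrightarrow> x \<in> K \<Longrightarrow> y \<in> K \<Longrightarrow> x + y \<in> K"
  and sf_mult: "is_subfield K \<Longrightarrow> x \<in> K \<Longrightarrow> y \<in> K \<Longrightarrow> x * y \<in> K"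
  and sf_uminus: "is_subfield K \<Longrightarrow> x \<in> K \<Longrightarrow> - x \<in> K"
  and sf_inverse: "is_subfield K \<Longrightarrow> x \<in> K \<Longrightarrow> inverse x \<in> K"
  unfolding is_subfield_def by auto

lemma sf_diff: "is_subfield K \<Longrightarrow> x \<in> K \<Longrightarrow> y \<in> K \<Longrightarrow> x - y \<in> K"
  by (metis diff_conv_add_uminus sf_add sf_uminus)

lemma sf_divide: "is_subfield K \<Longrightarrow> x \<in> K \<Longrightarrow> y \<in> K \<Longrightarrow> x / y \<in> K"
  by (simp add: divide_inverse sf_mult sf_inverse)

lemma sf_power: "is_subfield K \<Longrightarrow> x \<in> K \<Longrightarrow> x ^ n \<in> K"
  by (induction n) (auto intro: sf_mult sf_1)

lemma sf_sum: "is_subfield K \<Longrightarrow> (\<And>i. i \<in> A \<Longrightarrow> f i \<in> K) \<Longrightarrow> sum f A \<in> K"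
  by (induction A rule: infinite_finite_induct) (auto intro: sf_add sf_0)

section \<open>small sequences\<close>

definition small :: "(nat \<Rightarrow> bit fls) \<Rightarrow> bool" where
  "small f \<longleftrightarrow> (\<forall>M::nat. eventually (\<lambda>N. f N = 0 \<or> int M \<le> fls_subdegree (f N)) sequentially)"

lemma small_0: "small (\<lambda>N. 0)"
  unfolding small_def by simp

lemma small_add:
  assumes "small f" "small g" shows "small (\<lambda>N. f N + g N)"
  unfolding small_def
proof
  fix M
  have "eventually (\<lambda>N. (f N = 0 \<or> int M \<le> fls_subdegree (f N)) \<and> (g N = 0 \<or> int M \<le> fls_subdegree (g N))) sequentially"
    using assms unfolding small_def by (intro eventually_conj) auto
  then show "eventually (\<lambda>N. f N + g N = 0 \<or> int M \<le> fls_subdegree (f N + g N)) sequentially"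
  proof (rule eventually_mono)
    fix N assume h: "(f N = 0 \<or> int M \<le> fls_subdegree (f N)) \<and> (g N = 0 \<or> int M \<le> fls_subdegree (g N))"
    show "f N + g N = 0 \<or> int M \<le> fls_subdegree (f N + g N)"
    proof (cases "f N + g N = 0")
      case False
      then have "fls_subdegree (f N + g N) \<ge> min (fls_subdegree (f N)) (fls_subdegree (g N))"
        by (rule fls_plus_subdegree)
      then show ?thesis using h by auto
    qed simp
  qed
qed

lemma small_uminus: "small f \<Longrightarrow> small (\<lambda>N. - f N)"
  unfolding small_def by simp

lemma small_diff: "small f \<Longrightarrow> small g \<Longrightarrow> small (\<lambda>N. f N - g N)"
  using small_add[of f "\<lambda>N. - g N"] small_uminus[of g] by simp

lemma small_cmult:
  assumes "small f" shows "small (\<lambda>N. c * f N)"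
proof (cases "c = 0")
  case True then show ?thesis by (simp add: small_0)
next
  case False
  show ?thesis unfolding small_def
  proof
    fix M
    have "eventually (\<lambda>N. f N = 0 \<or> int (nat (int M - fls_subdegree c)) \<le> fls_subdegree (f N)) sequentially"
      using assms unfolding small_def by blast
    then show "eventually (\<lambda>N. c * f N = 0 \<or> int M \<le> fls_subdegree (c * f N)) sequentially"
    proof (rule eventually_mono)
      fix N assume h: "f N = 0 \<or> int (nat (int M - fls_subdegree c)) \<le> fls_subdegree (f N)"
      show "c * f N = 0 \<or> int M \<le> fls_subdegree (c * f N)"
      proof (cases "f N = 0")
        case False2: False
        then show ?thesis using h False by (auto split: if_splits)
      qed simp
    qed
  qed
qed

lemma small_pow:
  assumes "small f" "n > 0" shows "small (\<lambda>N. f N ^ n)"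
  unfolding small_def
proof
  fix M
  have "eventually (\<lambda>N. f N = 0 \<or> int M \<le> fls_subdegree (f N)) sequentially"
    using assms unfolding small_def by blast
  then show "eventually (\<lambda>N. f N ^ n = 0 \<or> int M \<le> fls_subdegree (f N ^ n)) sequentially"
  proof (rule eventually_mono)
    fix N assume "f N = 0 \<or> int M \<le> fls_subdegree (f N)"
    then show "f N ^ n = 0 \<or> int M \<le> fls_subdegree (f N ^ n)"
    proof
      assume h: "int M \<le> fls_subdegree (f N)"
      have "int M \<le> int n * int M" using assms(2) by (simp add: mult_le_cancel_right1)
      also have "\<dots> \<le> int n * fls_subdegree (f N)" using h by (simp add: mult_left_mono)
      finally show ?thesis by (simp add: fls_subdegree_pow)
    qed (use assms(2) in simp)
  qed
qed

lemma small_sum: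
  fixes d :: nat shows "(\<And>k. k < d \<Longrightarrow> small (f k)) \<Longrightarrow> small (\<lambda>N. \<Sum>k<d. f k N)"
  by (induction d) (auto simp: small_0 intro!: small_add)

lemma small_const: assumes "small (\<lambda>N. c)" shows "c = 0"
proof (rule ccontr)
  assume c: "c \<noteq> 0"
  have "eventually (\<lambda>N. c = 0 \<or> int (nat (fls_subdegree c + 1)) \<le> fls_subdegree c) sequentially"
    using assms unfolding small_def by blast
  then show False using c by (auto split: if_splits)
qed

lemma small_eventually_eq:
  assumes "small f" "\<And>N. N \<ge> N0 \<Longrightarrow> f N = g N" shows "small g"
  unfolding small_def
proof
  fix M
  have "eventually (\<lambda>N. f N = 0 \<or> int M \<le> fls_subdegree (f N)) sequentially"
    using assms unfolding small_def by blast
  moreover have "eventually (\<lambda>N. f N = g N) sequentially"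
    using assms(2) by (auto simp: eventually_sequentially)
  ultimately show "eventually (\<lambda>N. g N = 0 \<or> int M \<le> fls_subdegree (g N)) sequentially"
    by eventually_elim auto
qed

lemma small_compose:
  assumes "small f" "\<And>N. N \<le> h N + c" shows "small (\<lambda>N. f (h N))"
  unfolding small_def
proof
  fix M
  obtain N0 where N0: "\<And>N. N \<ge> N0 \<Longrightarrow> f N = 0 \<or> int M \<le> fls_subdegree (f N)"
    using assms(1) unfolding small_def eventually_sequentially by blast
  show "eventually (\<lambda>N. f (h N) = 0 \<or> int M \<le> fls_subdegree (f (h N))) sequentially"
    unfolding eventually_sequentially
  proof (intro exI allI impI)
    fix N assume "N \<ge> N0 + c"
    then have "h N \<ge> N0" using assms(2)[of N] by linarith
    then show "f (h N) = 0 \<or> int M \<le> fls_subdegree (f (h N))" by (rule N0)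
  qed
qed

lemma small_mult_bounded:
  assumes "small f" "\<And>N. g N \<noteq> 0 \<Longrightarrow> B \<le> fls_subdegree (g N)"
  shows "small (\<lambda>N. f N * g N)"
  unfolding small_def
proof
  fix M
  have "eventually (\<lambda>N. f N = 0 \<or> int (nat (int M - B)) \<le> fls_subdegree (f N)) sequentially"
    using assms unfolding small_def by blast
  then show "eventually (\<lambda>N. f N * g N = 0 \<or> int M \<le> fls_subdegree (f N * g N)) sequentially"
  proof (rule eventually_mono)
    fix N assume h: "f N = 0 \<or> int (nat (int M - B)) \<le> fls_subdegree (f N)"
    show "f N * g N = 0 \<or> int M \<le> fls_subdegree (f N * g N)"
    proof (cases "f N = 0 \<or> g N = 0")
      case False
      then have "B \<le> fls_subdegree (g N)" using assms(2) by auto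
      then show ?thesis using h False by (auto split: if_splits)
    qed auto
  qed
qed

lemma tendsto_small:
  fixes u :: "nat \<Rightarrow> bit fls"
  assumes "u \<longlonglongrightarrow> L" shows "small (\<lambda>N. u N - L)"
  unfolding small_def
proof
  fix M :: nat
  have "eventually (\<lambda>N. dist (u N) L < inverse (2 ^ M)) sequentially"
    using assms by (rule tendstoD) simp
  then show "eventually (\<lambda>N. u N - L = 0 \<or> int M \<le> fls_subdegree (u N - L)) sequentially"
  proof (rule eventually_mono)
    fix N assume d: "dist (u N) L < inverse (2 ^ M)"
    show "u N - L = 0 \<or> int M \<le> fls_subdegree (u N - L)"
    proof (cases "u N = L")
      case False
      define s where "s = fls_subdegree (u N - L)"
      show ?thesis
      proof (cases "s \<ge> 0")
        case True
        then have "inverse (2 ^ nat s) < inverse ((2::real) ^ M)"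
          using d False by (simp add: dist_fls_def s_def)
        then have "(2::real) ^ M < 2 ^ nat s"
          by (simp add: inverse_less_iff_less)
        then have "M < nat s" by (simp add: power_strict_increasing_iff)
        then show ?thesis using True unfolding s_def by linarith
      next
        case False2: False
        then have "(2::real) ^ nat (- s) < inverse (2 ^ M)"
          using d False by (simp add: dist_fls_def s_def)
        moreover have "(1::real) \<le> 2 ^ nat (- s)" by simp
        moreover have "inverse ((2::real) ^ M) \<le> 1" by (simp add: inverse_le_1_iff)
        ultimately show ?thesis by linarith
      qed
    qed simp
  qed
qed

type_synonym mat = "bit fls \<times> bit fls \<times> bit fls \<times> bit fls"

fun mmul :: "mat \<Rightarrow> mat \<Rightarrow> mat" where
  "mmul (p,q,r,s) (p',q',r',s') = (p*p'+q*r', p*q'+q*s', r*p'+s*r', r*q'+s*s')"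

fun prodl :: "bit fls list \<Rightarrow> mat" where
  "prodl [] = (1,0,0,1)"
| "prodl (a # w) = mmul (a,1,1,0) (prodl w)"

lemma mmul_assoc: "mmul (mmul A B) C = mmul A (mmul B C)"
  by (cases A; cases B; cases C) (simp add: algebra_simps)

lemma mmul_id: "mmul (1,0,0,1) A = A"
  by (cases A) simp

lemma prodl_append: "prodl (u @ v) = mmul (prodl u) (prodl v)"
  by (induction u) (simp_all add: mmul_id mmul_assoc)

lemma cf_mat:
  assumes neg: "\<And>i. fls_subdegree (a i) < 0"
  shows "\<exists>p q r s. prodl (map a [i..<Suc (i+k)]) = (p,q,r,s) \<and> r \<noteq> 0 \<and> cf_fin a i k = p / r
           \<and> fls_subdegree (cf_fin a i k) < 0"
proof (induction k arbitrary: i)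
  case 0
  show ?case using neg[of i] by simp
next
  case (Suc k)
  obtain p q r s where h: "prodl (map a [Suc i..<Suc (Suc i + k)]) = (p,q,r,s)" "r \<noteq> 0"
    "cf_fin a (Suc i) k = p / r" "fls_subdegree (cf_fin a (Suc i) k) < 0"
    using Suc[of "Suc i"] by blast
  have cnz: "cf_fin a (Suc i) k \<noteq> 0" using h(4) by auto
  then have pnz: "p \<noteq> 0" using h(3) by auto
  have ai: "a i \<noteq> 0" using neg[of i] by auto
  have up: "[i..<Suc (i + Suc k)] = i # [Suc i..<Suc (Suc i + k)]"
    by (simp add: upt_conv_Cons)
  have P0: "prodl (map a [i..<Suc (i + Suc k)]) = mmul (a i,1,1,0) (p,q,r,s)"
    by (simp only: up list.map prodl.simps h(1))
  have P: "prodl (map a [i..<Suc (i + Suc k)]) = (a i * p + r, a i * q + s, p, q)"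
    using P0 by simp
  have cf: "cf_fin a i (Suc k) = (a i * p + r) / p"
  proof -
    have "cf_fin a i (Suc k) = a i + r / p" by (simp add: h(3) inverse_divide)
    also have "\<dots> = (a i * p + r) / p" using pnz by (simp add: field_simps)
    finally show ?thesis .
  qed
  have sd: "fls_subdegree (cf_fin a i (Suc k)) = fls_subdegree (a i)"
    unfolding cf_fin.simps
    by (rule fls_subdegree_add_eq1) (use ai neg[of i] h(4) in auto)
  have "fls_subdegree (cf_fin a i (Suc k)) < 0" using sd neg[of i] by linarith
  then show ?case using P pnz cf by blast
qed

lemma length_W: "length (W e n) = 2 ^ n - 1"
proof (induction n)
  case (Suc n)
  have h: "(1::nat) \<le> 2 ^ n" by simp
  have "length (W e (Suc n)) = (2 ^ n - 1) + 1 + (2 ^ n - 1)" using Suc by simp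
  also have "\<dots> = 2 * 2 ^ n - 1" using h by linarith
  also have "\<dots> = 2 ^ Suc n - 1" by simp
  finally show ?case .
qed simp

lemma W_prefix: "\<exists>r. W e (n + j) = W e n @ r"
proof (induction j)
  case (Suc j)
  then obtain r where r: "W e (n + j) = W e n @ r" by blast
  have "W e (n + Suc j) = W e (n + j) @ [e (n + j)] @ W e (n + j)" by simp
  also have "\<dots> = W e n @ (r @ [e (n + j)] @ W e (n + j))" unfolding r by simp
  finally show ?case by blast
qed simp

lemma W_nth: assumes "i < length (W e n)" "i < length (W e m)" shows "W e n ! i = W e m ! i"
proof -
  have *: "W e n ! i = W e m ! i" if "n \<le> m" "i < length (W e n)" for n m
  proof -
    obtain r where "W e (n + (m - n)) = W e n @ r" using W_prefix by blast
    moreover have "n + (m - n) = m" using that(1) by simp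
    ultimately have "W e m = W e n @ r" by simp
    then show ?thesis using that(2) by (simp only: nth_append) simp
  qed
  show ?thesis
  proof (cases "n \<le> m")
    case True then show ?thesis using *[of n m] assms by blast
  next
    case False then show ?thesis using *[of m n] assms by (metis nat_le_linear)
  qed
qed

lemma sword_W: assumes "i < length (W e n)" shows "sword e i = W e n ! i"
proof -
  have "i < length (W e (Suc i))" unfolding length_W
  proof -
    have "i < 2 ^ i" by (rule less_exp)
    then have "i < 2 * 2 ^ i - 1" by linarith
    then show "i < 2 ^ Suc i - 1" by simp
  qed
  then show ?thesis unfolding sword_def using W_nth assms by blast
qed

primrec xs :: "(nat \<Rightarrow> bit poly) \<Rightarrow> nat \<Rightarrow> bit fls" where
  "xs e 0 = 1"
| "xs e (Suc n) = laurent_of_poly (e n) * xs e n ^ 2"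

primrec ys :: "(nat \<Rightarrow> bit poly) \<Rightarrow> nat \<Rightarrow> bit fls" where
  "ys e 0 = 0"
| "ys e (Suc n) = laurent_of_poly (e n) * xs e n * ys e n + 1"

primrec zs :: "(nat \<Rightarrow> bit poly) \<Rightarrow> nat \<Rightarrow> bit fls" where
  "zs e 0 = 1"
| "zs e (Suc n) = laurent_of_poly (e n) * ys e n ^ 2"

lemma c2: "a + 2 * b = (a::bit fls)" by (simp add: two_fls)

lemma prodl_W:
  "prodl (map laurent_of_poly (W e n)) = (xs e n, ys e n, ys e n, zs e n) \<and> xs e n * zs e n + ys e n ^ 2 = 1"
proof (induction n)
  case 0 then show ?case by simp
next
  case (Suc n)
  define x where "x = xs e n"
  define y where "y = ys e n"
  define z where "z = zs e n"
  define E where "E = laurent_of_poly (e n)"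
  have S: "prodl (map laurent_of_poly (W e n)) = (x,y,y,z)" and det: "x * z + y^2 = 1"
    using Suc by (simp_all add: x_def y_def z_def)
  have e1: "(x*E+y)*x + x*y = E*x^2"
  proof -
    have "(x*E+y)*x + x*y = E*x^2 + 2*(x*y)" by (simp add: algebra_simps power2_eq_square)
    then show ?thesis by (simp add: c2)
  qed
  have e2: "(x*E+y)*y + x*z = E*x*y+1"
  proof -
    have "(x*E+y)*y + x*z = E*x*y + (x*z+y^2)" by (simp add: algebra_simps power2_eq_square)
    then show ?thesis by (simp add: det)
  qed
  have e3: "(y*E+z)*x + y*y = E*x*y+1"
  proof -
    have "(y*E+z)*x + y*y = E*x*y + (x*z+y^2)" by (simp add: algebra_simps power2_eq_square)
    then show ?thesis by (simp add: det)
  qed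
  have e4: "(y*E+z)*y + y*z = E*y^2"
  proof -
    have "(y*E+z)*y + y*z = E*y^2 + 2*(y*z)" by (simp add: algebra_simps power2_eq_square)
    then show ?thesis by (simp add: c2)
  qed
  have d: "E*x^2 * (E*y^2) + (E*x*y+1)^2 = 1"
  proof -
    have "E*x^2 * (E*y^2) + (E*x*y+1)^2 = E*x^2 * (E*y^2) + (E*x*y)^2 + 1"
      by (simp add: sq_add_fls)
    also have "\<dots> = 1 + 2 * ((E*x*y)^2)" by (simp add: algebra_simps power2_eq_square)
    finally show ?thesis by (simp add: c2)
  qed
  have m: "map laurent_of_poly (W e (Suc n)) = map laurent_of_poly (W e n) @ [E] @ map laurent_of_poly (W e n)"
    by (simp add: E_def)
  have pE: "prodl [E] = (E,1,1,0)" by simp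
  have "prodl (map laurent_of_poly (W e (Suc n))) = mmul (x,y,y,z) (mmul (E,1,1,0) (x,y,y,z))"
    unfolding m prodl_append pE S ..
  also have "\<dots> = mmul (mmul (x,y,y,z) (E,1,1,0)) (x,y,y,z)" by (rule mmul_assoc[symmetric])
  also have "\<dots> = (E*x^2, E*x*y+1, E*x*y+1, E*y^2)"
    by (simp only: mmul.simps mult_1_right mult_zero_right add_0_right e1 e2 e3 e4)
  finally have P: "prodl (map laurent_of_poly (W e (Suc n))) = (E*x^2, E*x*y+1, E*x*y+1, E*y^2)" .
  have Q: "(xs e (Suc n), ys e (Suc n), ys e (Suc n), zs e (Suc n)) = (E*x^2, E*x*y+1, E*x*y+1, E*y^2)"
    by (simp add: x_def y_def z_def E_def mult.assoc)
  have R: "xs e (Suc n) * zs e (Suc n) + ys e (Suc n) ^ 2 = 1"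
    using d by (simp add: x_def y_def z_def E_def mult.assoc)
  show ?case by (rule conjI[OF trans[OF P Q[symmetric]] R])
qed

definition lc :: "'a::field set \<Rightarrow> (nat \<Rightarrow> nat \<Rightarrow> 'a) \<Rightarrow> nat \<Rightarrow> (nat \<Rightarrow> 'a) set" where
  "lc K v m = {x. \<exists>b. (\<forall>k<m. b k \<in> K) \<and> x = (\<lambda>r. \<Sum>k<m. b k * v k r)}"

lemma lc_zero: "is_subfield K \<Longrightarrow> (\<lambda>r. 0) \<in> lc K v m"
  unfolding lc_def by (rule CollectI, rule exI[of _ "\<lambda>k. 0"]) (simp add: sf_0)

lemma lc_add: assumes "is_subfield K" "x \<in> lc K v m" "y \<in> lc K v m" shows "(\<lambda>r. x r + y r) \<in> lc K v m"
proof -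
  obtain b where b: "\<forall>k<m. b k \<in> K" "x = (\<lambda>r. \<Sum>k<m. b k * v k r)" using assms unfolding lc_def by blast
  obtain c where c: "\<forall>k<m. c k \<in> K" "y = (\<lambda>r. \<Sum>k<m. c k * v k r)" using assms unfolding lc_def by blast
  show ?thesis unfolding lc_def
    by (rule CollectI, rule exI[of _ "\<lambda>k. b k + c k"])
       (use b c assms(1) in \<open>auto simp: sf_add sum.distrib distrib_right\<close>)
qed

lemma lc_smult: assumes "is_subfield K" "a \<in> K" "x \<in> lc K v m" shows "(\<lambda>r. a * x r) \<in> lc K v m"
proof -
  obtain b where b: "\<forall>k<m. b k \<in> K" "x = (\<lambda>r. \<Sum>k<m. b k * v k r)" using assms unfolding lc_def by blast
  show ?thesis unfolding lc_def
    by (rule CollectI, rule exI[of _ "\<lambda>k. a * b k"])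
       (use b assms in \<open>auto simp: sf_mult sum_distrib_left mult.assoc\<close>)
qed

lemma lc_diff: assumes "is_subfield K" "x \<in> lc K v m" "y \<in> lc K v m" shows "(\<lambda>r. x r - y r) \<in> lc K v m"
proof -
  have "(\<lambda>r. (-1) * y r) \<in> lc K v m" by (rule lc_smult) (use assms in \<open>auto simp: sf_uminus sf_1\<close>)
  from lc_add[OF assms(1,2) this] show ?thesis by simp
qed

lemma lc_base: assumes "is_subfield K" "k < m" shows "v k \<in> lc K v m"
  unfolding lc_def
proof (rule CollectI, rule exI[of _ "\<lambda>j. if j = k then 1 else 0"], intro conjI)
  show "\<forall>j<m. (if j = k then 1 else 0) \<in> K" using assms by (auto simp: sf_0 sf_1)
  have "(\<Sum>j<m. (if j = k then 1 else 0) * v j r) = (\<Sum>j<m. if j = k then v k r else 0)" for r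
    by (rule sum.cong) auto
  then show "v k = (\<lambda>r. \<Sum>j<m. (if j = k then 1 else 0) * v j r)"
    using assms by (auto simp: sum.delta)
qed

lemma lc_trans:
  assumes K: "is_subfield K" and w: "\<And>k. k < m \<Longrightarrow> w k \<in> lc K v m'" and x: "x \<in> lc K w m"
  shows "x \<in> lc K v m'"
proof -
  have "\<forall>b. (\<forall>k<j. b k \<in> K) \<longrightarrow> (\<lambda>r. \<Sum>k<j. b k * w k r) \<in> lc K v m'" if "j \<le> m" for j
    using that
  proof (induction j)
    case 0 then show ?case using lc_zero[OF K] by simp
  next
    case (Suc j)
    show ?case
    proof (intro allI impI)
      fix b assume b: "\<forall>k<Suc j. b k \<in> K"
      have 1: "(\<lambda>r. \<Sum>k<j. b k * w k r) \<in> lc K v m'" using Suc b by auto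
      have 2: "(\<lambda>r. b j * w j r) \<in> lc K v m'" using b Suc(2) by (intro lc_smult K w) auto
      show "(\<lambda>r. \<Sum>k<Suc j. b k * w k r) \<in> lc K v m'" using lc_add[OF K 1 2] by simp
    qed
  qed
  then show ?thesis using x unfolding lc_def[of K w m] by auto
qed

lemma lc_mono: assumes "is_subfield K" "m \<le> m'" "x \<in> lc K v m" shows "x \<in> lc K v m'"
  by (rule lc_trans[OF assms(1) _ assms(3)]) (use assms in \<open>auto intro: lc_base\<close>)

lemma steinitz:
  assumes K: "is_subfield K"
  shows "(\<forall>k\<le>n. \<forall>r. v k r \<in> K) \<Longrightarrow> (\<forall>k\<le>n. \<forall>r\<ge>n. v k r = 0) \<Longrightarrow> \<exists>m\<le>n. v m \<in> lc K v m"
proof (induction n arbitrary: v)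
  case 0
  have "v 0 = (\<lambda>r. 0)" using 0 by auto
  then show ?case using lc_zero[OF K, of v 0] by auto
next
  case (Suc n)
  show ?case
  proof (cases "\<forall>k\<le>n. v k n = 0")
    case True
    have "\<forall>k\<le>n. \<forall>r\<ge>n. v k r = 0"
    proof (intro allI impI)
      fix k r assume "k \<le> n" "n \<le> r"
      then show "v k r = 0" using True Suc.prems(2) by (cases "r = n") auto
    qed
    then obtain m where "m \<le> n" "v m \<in> lc K v m" using Suc.IH[of v] Suc.prems(1) by auto
    then show ?thesis by (intro exI[of _ m]) auto
  next
    case False
    define k0 where "k0 = (LEAST k. k \<le> n \<and> v k n \<noteq> 0)"
    have k0: "k0 \<le> n" "v k0 n \<noteq> 0" using False LeastI_ex[of "\<lambda>k. k \<le> n \<and> v k n \<noteq> 0"]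
      unfolding k0_def by auto
    have below: "v k n = 0" if "k < k0" for k
      using not_less_Least[of k "\<lambda>k. k \<le> n \<and> v k n \<noteq> 0"] that k0 unfolding k0_def[symmetric] by auto
    define c where "c k = v (Suc k) n / v k0 n" for k
    define v' where "v' k = (if k < k0 then v k else (\<lambda>r. v (Suc k) r - c k * v k0 r))" for k
    have cK: "c k \<in> K" if "k \<le> n" for k
      unfolding c_def using that k0 Suc.prems(1) by (intro sf_divide K) auto
    have h1: "\<forall>k\<le>n. \<forall>r. v' k r \<in> K"
      using Suc.prems(1) cK k0 by (auto simp: v'_def intro!: sf_diff sf_mult K)
    have h2: "\<forall>k\<le>n. \<forall>r\<ge>n. v' k r = 0"
    proof (intro allI impI)
      fix k r assume kr: "k \<le> n" "n \<le> r"
      show "v' k r = 0"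
      proof (cases "r = n")
        case True
        then show ?thesis using below k0 by (auto simp: v'_def c_def)
      next
        case False
        then show ?thesis using kr Suc.prems(2) k0 by (auto simp: v'_def)
      qed
    qed
    obtain m where m: "m \<le> n" "v' m \<in> lc K v' m" using Suc.IH[OF h1 h2] by auto
    show ?thesis
    proof (cases "m < k0")
      case True
      have "v m \<in> lc K v m"
        by (rule lc_trans[OF K _ m(2)[unfolded v'_def if_P[OF True]]])
           (use True in \<open>auto simp: v'_def intro: lc_base[OF K]\<close>)
      then show ?thesis using m by (intro exI[of _ m]) auto
    next
      case False
      have w: "v' k \<in> lc K v (Suc m)" if "k < m" for k
      proof (cases "k < k0")
        case True then show ?thesis using that by (auto simp: v'_def intro: lc_base[OF K])
      next
        case False2: False
        have "(\<lambda>r. c k * v k0 r) \<in> lc K v (Suc m)"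
          using False that m by (intro lc_smult K cK lc_base) auto
        then show ?thesis using False2 that
          by (auto simp: v'_def intro!: lc_diff K lc_base)
      qed
      have "v' m \<in> lc K v (Suc m)"
        by (rule lc_trans[OF K _ m(2)]) (use w in auto)
      then have A: "(\<lambda>r. v (Suc m) r - c m * v k0 r) \<in> lc K v (Suc m)"
        using False by (simp add: v'_def)
      have B: "(\<lambda>r. c m * v k0 r) \<in> lc K v (Suc m)"
        using False m by (intro lc_smult K cK lc_base) auto
      have "v (Suc m) = (\<lambda>r. (v (Suc m) r - c m * v k0 r) + c m * v k0 r)" by simp
      then have "v (Suc m) \<in> lc K v (Suc m)" using lc_add[OF K A B] by simp
      then show ?thesis using m by (intro exI[of _ "Suc m"]) auto
    qed
  qed
qed

lemma sum_sq_fls: "(\<Sum>k\<in>A. f k :: bit fls)^2 = (\<Sum>k\<in>A. (f k)^2)"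
  by (induction A rule: infinite_finite_induct) (auto simp: sq_add_fls)

definition Tm :: "nat \<Rightarrow> (nat \<Rightarrow> bit fls) \<Rightarrow> (nat \<Rightarrow> bit fls) \<Rightarrow> nat \<Rightarrow> bit fls" where
  "Tm d w x r = (if r < d then x (if r = 0 then d - 1 else r - 1) ^ 2 * w r else 0)"

lemma Tm_lc:
  assumes K: "is_subfield K" and x: "x \<in> lc K v m"
  shows "Tm d w x \<in> lc K (\<lambda>k. Tm d w (v k)) m"
proof -
  obtain b where b: "\<forall>k<m. b k \<in> K" "x = (\<lambda>r. \<Sum>k<m. b k * v k r)" using x unfolding lc_def by blast
  show ?thesis unfolding lc_def
  proof (rule CollectI, rule exI[of _ "\<lambda>k. (b k)^2"], intro conjI)
    show "\<forall>k<m. (b k)^2 \<in> K" using b K by (auto intro: sf_power)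
    show "Tm d w x = (\<lambda>r. \<Sum>k<m. (b k)^2 * Tm d w (v k) r)"
      by (rule ext) (auto simp: Tm_def b(2) sum_sq_fls power_mult_distrib sum_distrib_right mult.assoc)
  qed
qed

lemma relation_exists:
  assumes K: "is_subfield K" and VS: "\<And>k. V (Suc k) = Tm d w (V k)"
    and VK: "\<And>k r. V k r \<in> K" and V0: "\<And>k r. r \<ge> d \<Longrightarrow> V k r = 0"
  shows "\<exists>B. (\<forall>k<d. B k \<in> K) \<and> V d = (\<lambda>r. \<Sum>k<d. B k * V k r)"
proof -
  obtain m where m: "m \<le> d" "V m \<in> lc K V m" using steinitz[OF K, of d V] VK V0 by auto
  have "V (m + j) \<in> lc K V m" for j
  proof (induction j)
    case 0 then show ?case using m by simp
  next
    case (Suc j)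
    have "Tm d w (V (m + j)) \<in> lc K (\<lambda>k. Tm d w (V k)) m" by (rule Tm_lc[OF K Suc])
    then have 1: "V (m + Suc j) \<in> lc K (\<lambda>k. V (Suc k)) m" by (simp add: VS)
    show ?case
    proof (rule lc_trans[OF K _ 1])
      fix k assume "k < m"
      then show "V (Suc k) \<in> lc K V m"
        using m(2) by (cases "Suc k = m") (auto intro: lc_base[OF K])
    qed
  qed
  then have "V d \<in> lc K V m" using m(1) by (metis le_add_diff_inverse)
  then have "V d \<in> lc K V d" using m(1) by (rule lc_mono[OF K, rotated])
  then show ?thesis unfolding lc_def by auto
qed

lemma frob_pow: "((x::bit fls) - y) ^ (2 ^ k) = x ^ (2 ^ k) - y ^ (2 ^ k)"
proof (induction k)
  case (Suc k)
  have "(x - y) ^ (2 ^ Suc k) = ((x - y) ^ (2 ^ k))^2" by (simp add: power_mult[symmetric] mult.commute)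
  also have "\<dots> = (x ^ (2 ^ k) + y ^ (2 ^ k))^2" by (subst Suc) (simp only: minus_fls)
  also have "\<dots> = x ^ (2 ^ Suc k) + y ^ (2 ^ Suc k)" by (simp add: sq_add_fls power_mult[symmetric] mult.commute)
  finally show ?case by (simp add: minus_fls)
qed simp

locale cfs =
  fixes l d :: nat and eps :: "nat \<Rightarrow> bit poly"
  assumes d_pos: "d \<ge> 1"
    and nonconst: "\<And>n. degree (eps n) > 0"
    and periodic: "\<And>n. n \<ge> l \<Longrightarrow> eps (n + d) = eps n"
begin

abbreviation e where "e n \<equiv> laurent_of_poly (eps n)"

definition K where "K = gen_subfield (laurent_of_poly ` eps ` {..<l + d})"

lemma K: "is_subfield K" unfolding K_def by (rule gen_subfield_sub)

lemma e_nz: "e n \<noteq> 0" "fls_subdegree (e n) \<le> -1"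
proof -
  have "eps n \<noteq> 0" using nonconst[of n] by auto
  then show "e n \<noteq> 0" "fls_subdegree (e n) \<le> -1" using laurent_nz[of "eps n"] nonconst[of n] by auto
qed

lemma period: "n \<ge> l \<Longrightarrow> eps (n + j * d) = eps n"
proof (induction j)
  case (Suc j)
  have "eps (n + Suc j * d) = eps ((n + j * d) + d)" by (simp add: algebra_simps)
  also have "\<dots> = eps (n + j * d)" using Suc by (intro periodic) auto
  finally show ?case using Suc by simp
qed simp

lemma e_K: "e n \<in> K"
proof (cases "n < l + d")
  case True
  then have "e n \<in> laurent_of_poly ` eps ` {..<l + d}" by simp
  then show ?thesis unfolding K_def by (rule subsetD[OF gen_subfield_gen])
next
  case False
  define q where "q = (n - l) div d"
  define r where "r = (n - l) mod d"
  have h: "r + q * d = n - l" unfolding q_def r_def by (rule mod_div_mult_eq)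
  have rl: "r < d" unfolding r_def using d_pos by simp
  have ln: "l \<le> n" using False by simp
  have eq: "(l + r) + q * d = n" using h ln by linarith
  have "eps ((l + r) + q * d) = eps (l + r)" by (rule period) simp
  then have "eps n = eps (l + r)" by (simp only: eq)
  moreover have "l + r < l + d" using rl by simp
  ultimately have "e n \<in> laurent_of_poly ` eps ` {..<l + d}" by (metis image_eqI lessThan_iff)
  then show ?thesis unfolding K_def by (rule subsetD[OF gen_subfield_gen])
qed

lemma xs_facts: "xs eps n \<noteq> 0 \<and> fls_subdegree (xs eps n) \<le> - int n \<and> xs eps n \<in> K"
proof (induction n)
  case 0 then show ?case using K by (simp add: sf_1)
next
  case (Suc n)
  have nz: "xs eps (Suc n) \<noteq> 0" using Suc e_nz by simp
  have "fls_subdegree (xs eps (Suc n)) = fls_subdegree (e n) + 2 * fls_subdegree (xs eps n)"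
    using Suc e_nz by (simp add: fls_subdegree_pow)
  then have "fls_subdegree (xs eps (Suc n)) \<le> - int (Suc n)" using Suc e_nz(2)[of n] by linarith
  moreover have "xs eps (Suc n) \<in> K" using Suc by (simp add: sf_mult[OF K] sf_power[OF K] e_K)
  ultimately show ?case using nz by blast
qed

definition u where "u n = inverse (xs eps n)"

lemma u_K: "u n \<in> K" unfolding u_def using xs_facts sf_inverse[OF K] by blast

lemma u_sd: "int n \<le> fls_subdegree (u n)" unfolding u_def using xs_facts[of n] by simp

lemma u_sq: "u n ^ 2 = e n * u (Suc n)"
  unfolding u_def using xs_facts[of n] e_nz by (simp add: field_simps power2_eq_square)

definition bN where "bN n = ys eps n / xs eps n"

lemma bN_Suc: "bN (Suc n) = bN n + u (Suc n)"
  unfolding bN_def u_def using xs_facts[of n] e_nz by (simp add: field_simps power2_eq_square)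

lemma bN_add: "bN (m + k) = bN m + (\<Sum>r<k. u (m + 1 + r))"
  by (induction k) (simp_all add: bN_Suc)

lemma bN_K: "bN n \<in> K"
proof (induction n)
  case 0 then show ?case by (simp add: bN_def sf_0[OF K])
next
  case (Suc n) then show ?case by (simp add: bN_Suc sf_add[OF K] u_K)
qed

definition S where "S r N = (\<Sum>j<N. u (l + 1 + r + j * d))"

lemma S_sq: "S r N ^ 2 = e (l + 1 + r) * (\<Sum>j<N. u (l + 1 + (r + 1) + j * d))"
proof -
  have "S r N ^ 2 = (\<Sum>j<N. u (l + 1 + r + j * d) ^ 2)" unfolding S_def by (rule sum_sq_fls)
  also have "\<dots> = (\<Sum>j<N. e (l + 1 + r) * u (l + 1 + (r + 1) + j * d))"
  proof (rule sum.cong[OF refl])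
    fix j
    have "eps (l + 1 + r + j * d) = eps (l + 1 + r)" by (rule period) simp
    then show "u (l + 1 + r + j * d) ^ 2 = e (l + 1 + r) * u (l + 1 + (r + 1) + j * d)"
      by (simp add: u_sq)
  qed
  finally show ?thesis by (simp add: sum_distrib_left)
qed

lemma S_sq1: "S r N ^ 2 = e (l + 1 + r) * S (r + 1) N"
  by (simp only: S_sq S_def[of "r + 1" N])

lemma sum_last: "(\<Sum>r<d. f r) = (\<Sum>r<d - 1. f r) + f (d - 1)"
proof -
  obtain D where D: "d = Suc D" using d_pos by (cases d) auto
  show ?thesis unfolding D by simp
qed

lemma sum_first: "(\<Sum>r<d. f r) = f 0 + (\<Sum>r<d - 1. f (Suc r))"
proof -
  obtain D where D: "d = Suc D" using d_pos by (cases d) auto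
  show ?thesis unfolding D diff_Suc_1 by (rule sum.lessThan_Suc_shift)
qed

lemma S_sq2: "S (d - 1) N ^ 2 = e (l + d) * (S 0 N + u (l + 1 + N * d) - u (l + 1))"
proof -
  have "(\<Sum>j<N. u (l + 1 + (d - 1 + 1) + j * d)) = (\<Sum>j<N. u (l + 1 + Suc j * d))"
    using d_pos by (intro sum.cong) (auto simp: algebra_simps)
  also have "\<dots> = (\<Sum>j<Suc N. u (l + 1 + j * d)) - u (l + 1)"
    by (subst sum.lessThan_Suc_shift) simp
  also have "\<dots> = S 0 N + u (l + 1 + N * d) - u (l + 1)"
    by (simp add: S_def)
  finally show ?thesis using d_pos by (simp add: S_sq)
qed

lemma bN_decomp: "bN (l + N * d) = bN l + (\<Sum>r<d. S r N)"
proof (induction N)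
  case 0 then show ?case by (simp add: S_def)
next
  case (Suc N)
  have "bN (l + Suc N * d) = bN (l + N * d + d)" by (simp add: algebra_simps)
  also have "\<dots> = bN (l + N * d) + (\<Sum>r<d. u (l + N * d + 1 + r))" by (rule bN_add)
  also have "\<dots> = bN l + (\<Sum>r<d. S r N + u (l + 1 + r + N * d))"
    by (simp add: Suc sum.distrib algebra_simps)
  also have "\<dots> = bN l + (\<Sum>r<d. S r (Suc N))" by (simp add: S_def)
  finally show ?case .
qed

definition w where "w r = e (l + (if r = 0 then d else r))"

primrec V where
  "V 0 = (\<lambda>r. if r < d then 1 else 0)"
| "V (Suc k) = Tm d w (V k)"

primrec cc where
  "cc 0 = bN l"
| "cc (Suc k) = cc k ^ 2 - V k (d - 1) ^ 2 * e (l + d) * u (l + 1)"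

primrec EE where
  "EE 0 = (\<lambda>N. 0)"
| "EE (Suc k) = (\<lambda>N. EE k N ^ 2 + V k (d - 1) ^ 2 * e (l + d) * u (l + 1 + N * d))"

lemma V_K: "V k r \<in> K"
  by (induction k arbitrary: r) (auto simp: Tm_def w_def sf_0[OF K] sf_1[OF K] e_K intro!: sf_mult[OF K] sf_power[OF K])

lemma V_0: "r \<ge> d \<Longrightarrow> V k r = 0"
  by (cases k) (auto simp: Tm_def)

lemma cc_K: "cc k \<in> K"
  by (induction k) (auto simp: bN_K e_K u_K V_K intro!: sf_diff[OF K] sf_mult[OF K] sf_power[OF K])

lemma small_u: "small (\<lambda>N. u (l + 1 + N * d))"
proof -
  have "small u" unfolding small_def eventually_sequentially
  proof (intro allI exI impI)
    fix M N :: nat assume "M \<le> N"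
    then show "u N = 0 \<or> int M \<le> fls_subdegree (u N)" using u_sd[of N] by auto
  qed
  moreover have "N \<le> l + 1 + N * d + 0" for N
  proof -
    have "N \<le> N * d" using d_pos by simp
    then show ?thesis by linarith
  qed
  ultimately show ?thesis by (rule small_compose)
qed

lemma EE_small: "small (EE k)"
proof (induction k)
  case 0 then show ?case by (simp add: small_0)
next
  case (Suc k)
  have 1: "small (\<lambda>N. EE k N ^ 2)" by (rule small_pow[OF Suc]) simp
  have 2: "small (\<lambda>N. (V k (d - 1) ^ 2 * e (l + d)) * u (l + 1 + N * d))" by (rule small_cmult[OF small_u])
  show ?case unfolding EE.simps using small_add[OF 1 2] by simp
qed

lemma coord: "bN (l + N * d) ^ (2 ^ k) = cc k + (\<Sum>r<d. V k r * S r N) + EE k N"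
proof (induction k)
  case 0
  have "(\<Sum>r<d. V 0 r * S r N) = (\<Sum>r<d. S r N)" by (intro sum.cong) auto
  then show ?case by (simp add: bN_decomp)
next
  case (Suc k)
  have dd: "l + 1 + (d - 1) = l + d" using d_pos by simp
  have sq: "(\<Sum>r<d. V k r * S r N) ^ 2 = (\<Sum>r<d - 1. V k r ^ 2 * e (l + Suc r) * S (Suc r) N)
           + V k (d - 1) ^ 2 * e (l + d) * (S 0 N + u (l + 1 + N * d) - u (l + 1))"
  proof -
    have "(\<Sum>r<d. V k r * S r N) ^ 2 = (\<Sum>r<d. V k r ^ 2 * S r N ^ 2)"
      by (simp add: sum_sq_fls power_mult_distrib)
    also have "\<dots> = (\<Sum>r<d - 1. V k r ^ 2 * S r N ^ 2) + V k (d - 1) ^ 2 * S (d - 1) N ^ 2"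
      by (rule sum_last)
    also have "(\<Sum>r<d - 1. V k r ^ 2 * S r N ^ 2) = (\<Sum>r<d - 1. V k r ^ 2 * e (l + Suc r) * S (Suc r) N)"
    proof (intro sum.cong refl)
      fix r
      have "S r N ^ 2 = e (l + 1 + r) * S (r + 1) N" by (rule S_sq1)
      then show "V k r ^ 2 * S r N ^ 2 = V k r ^ 2 * e (l + Suc r) * S (Suc r) N"
        by (simp add: mult.assoc)
    qed
    also have "S (d - 1) N ^ 2 = e (l + d) * (S 0 N + u (l + 1 + N * d) - u (l + 1))"
      by (rule S_sq2)
    finally show ?thesis by (simp add: mult.assoc)
  qed
  have tgt: "(\<Sum>r<d. V (Suc k) r * S r N) = V k (d - 1) ^ 2 * e (l + d) * S 0 N
           + (\<Sum>r<d - 1. V k r ^ 2 * e (l + Suc r) * S (Suc r) N)"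
  proof -
    have "(\<Sum>r<d. V (Suc k) r * S r N) = V (Suc k) 0 * S 0 N + (\<Sum>r<d - 1. V (Suc k) (Suc r) * S (Suc r) N)"
      by (rule sum_first)
    also have "V (Suc k) 0 = V k (d - 1) ^ 2 * e (l + d)" using d_pos by (simp add: Tm_def w_def)
    also have "(\<Sum>r<d - 1. V (Suc k) (Suc r) * S (Suc r) N) = (\<Sum>r<d - 1. V k r ^ 2 * e (l + Suc r) * S (Suc r) N)"
      by (intro sum.cong refl) (auto simp: Tm_def w_def)
    finally show ?thesis .
  qed
  have "bN (l + N * d) ^ (2 ^ Suc k) = (bN (l + N * d) ^ (2 ^ k)) ^ 2"
    by (simp add: power_mult[symmetric] mult.commute)
  also have "\<dots> = cc k ^ 2 + (\<Sum>r<d. V k r * S r N) ^ 2 + EE k N ^ 2"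
    by (simp only: Suc sq_add_fls)
  also have "\<dots> = cc (Suc k) + (\<Sum>r<d. V (Suc k) r * S r N) + EE (Suc k) N"
    unfolding sq tgt by (simp add: algebra_simps)
  finally show ?case .
qed

end

lemma set_W: "set (W e n) \<subseteq> range e"
  by (induction n) auto

context cfs
begin

lemma main_rel:
  assumes alpha: "is_CF \<alpha> (\<lambda>i. laurent_of_poly (sword eps i))"
  shows "\<alpha> \<noteq> 0 \<and> (\<exists>A B. A \<in> K \<and> (\<forall>k<d. B k \<in> K)
            \<and> inverse \<alpha> ^ (2 ^ d) = A + (\<Sum>k<d. B k * inverse \<alpha> ^ (2 ^ k)))"
proof -
  define a where "a i = laurent_of_poly (sword eps i)" for i
  have neg: "fls_subdegree (a i) < 0" for i
  proof -
    have "sword eps i \<in> set (W eps (Suc i))" unfolding sword_def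
    proof (rule nth_mem)
      have "i < 2 ^ i" by (rule less_exp)
      then have "i < 2 * 2 ^ i - 1" by linarith
      then show "i < length (W eps (Suc i))" unfolding length_W by simp
    qed
    then have "sword eps i \<in> range eps" using set_W[of eps "Suc i"] by blast
    then obtain n where n: "sword eps i = eps n" by (rule rangeE)
    have "eps n \<noteq> 0" using nonconst[of n] by auto
    then show ?thesis unfolding a_def n using laurent_nz[of "eps n"] nonconst[of n] by simp
  qed
  have cfneg: "fls_subdegree (cf_fin a 0 n) < 0" for n
    using cf_mat[where a=a and i=0 and k=n, OF neg] by blast
  have cfnz: "cf_fin a 0 n \<noteq> 0" for n
  proof
    assume "cf_fin a 0 n = 0"
    then show False using cfneg[of n] by simp
  qed
  have lim: "(\<lambda>n. cf_fin a 0 n) \<longlonglongrightarrow> \<alpha>"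
    using alpha unfolding is_CF_def a_def[abs_def] by simp
  have sm: "small (\<lambda>n. cf_fin a 0 n - \<alpha>)" by (rule tendsto_small[OF lim])
  have anz: "\<alpha> \<noteq> 0"
  proof
    assume "\<alpha> = 0"
    then have "small (\<lambda>n. cf_fin a 0 n)" using sm by simp
    then have "eventually (\<lambda>n. cf_fin a 0 n = 0 \<or> int 0 \<le> fls_subdegree (cf_fin a 0 n)) sequentially"
      unfolding small_def by blast
    then obtain N0 where "cf_fin a 0 N0 = 0 \<or> int 0 \<le> fls_subdegree (cf_fin a 0 N0)"
      unfolding eventually_sequentially by blast
    then show False using cfnz[of N0] cfneg[of N0] by linarith
  qed
  have cfW: "cf_fin a 0 (2 ^ M - 2) = xs eps M / ys eps M" if M: "M \<ge> 1" for M
  proof -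
    obtain p q r s where h: "prodl (map a [0..<Suc (0 + (2 ^ M - 2))]) = (p,q,r,s)"
      "r \<noteq> 0" "cf_fin a 0 (2 ^ M - 2) = p / r"
      using cf_mat[where a=a and i=0 and k="2 ^ M - 2", OF neg] by blast
    have "(2::nat) ^ 1 \<le> 2 ^ M" using M by (rule power_increasing) simp
    then have len: "Suc (0 + (2 ^ M - 2)) = length (W eps M)" unfolding length_W by simp
    have "map a [0..<Suc (0 + (2 ^ M - 2))] = map laurent_of_poly (W eps M)"
    proof (rule nth_equalityI)
      show "length (map a [0..<Suc (0 + (2 ^ M - 2))]) = length (map laurent_of_poly (W eps M))"
        using len by simp
      fix i assume "i < length (map a [0..<Suc (0 + (2 ^ M - 2))])"
      then have i: "i < length (W eps M)" using len by simp
      have "map a [0..<Suc (0 + (2 ^ M - 2))] ! i = a i" using i len by simp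
      also have "\<dots> = laurent_of_poly (W eps M ! i)" unfolding a_def using sword_W[OF i] by simp
      also have "\<dots> = map laurent_of_poly (W eps M) ! i" using i by simp
      finally show "map a [0..<Suc (0 + (2 ^ M - 2))] ! i = map laurent_of_poly (W eps M) ! i" .
    qed
    then have "(p,q,r,s) = prodl (map laurent_of_poly (W eps M))" using h(1) by simp
    also have "\<dots> = (xs eps M, ys eps M, ys eps M, zs eps M)" by (rule conjunct1[OF prodl_W])
    finally have "p = xs eps M" "r = ys eps M" by simp_all
    then show ?thesis using h(3) by simp
  qed
  define hh where "hh N = 2 ^ (l + N * d) - (2::nat)" for N
  define c where "c N = cf_fin a 0 (hh N)" for N
  have hh: "N \<le> hh N + 2" for N
  proof -
    have "N < 2 ^ N" by (rule less_exp)
    moreover have "N \<le> l + N * d" using d_pos by (simp add: trans_le_add2)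
    then have "(2::nat) ^ N \<le> 2 ^ (l + N * d)" by (rule power_increasing) simp
    ultimately show ?thesis unfolding hh_def by linarith
  qed
  have smc: "small (\<lambda>N. c N - \<alpha>)"
    unfolding c_def using small_compose[OF sm hh] by simp
  have smi: "small (\<lambda>N. inverse (c N) - inverse \<alpha>)"
  proof -
    have bd: "- fls_subdegree \<alpha> \<le> fls_subdegree (- (inverse (c N) * inverse \<alpha>))"
      if "- (inverse (c N) * inverse \<alpha>) \<noteq> 0" for N
    proof -
      have "c N \<noteq> 0" "fls_subdegree (c N) < 0" unfolding c_def using cfnz cfneg by auto
      then show ?thesis using anz by simp
    qed
    have "small (\<lambda>N. (c N - \<alpha>) * - (inverse (c N) * inverse \<alpha>))"
      by (rule small_mult_bounded[OF smc bd])
    moreover have "(c N - \<alpha>) * - (inverse (c N) * inverse \<alpha>) = inverse (c N) - inverse \<alpha>" for N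
    proof -
      have "c N \<noteq> 0" unfolding c_def using cfnz by auto
      then have 1: "c N * inverse (c N) = 1" by simp
      have 2: "\<alpha> * inverse \<alpha> = 1" using anz by simp
      have "(c N - \<alpha>) * - (inverse (c N) * inverse \<alpha>)
          = - ((c N * inverse (c N)) * inverse \<alpha>) + (\<alpha> * inverse \<alpha>) * inverse (c N)"
        by (simp add: algebra_simps)
      also have "\<dots> = inverse (c N) - inverse \<alpha>" unfolding 1 2 by simp
      finally show ?thesis .
    qed
    ultimately show ?thesis by simp
  qed
  define \<beta> where "\<beta> = inverse \<alpha>"
  have smb: "small (\<lambda>N. bN (l + N * d) - \<beta>)"
  proof (rule small_eventually_eq[OF smi])
    fix N :: nat assume "N \<ge> 1"
    then have "1 \<le> N * d" using d_pos by (simp add: one_le_mult_iff)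
    then have M: "l + N * d \<ge> 1" by linarith
    have "c N = xs eps (l + N * d) / ys eps (l + N * d)" unfolding c_def hh_def by (rule cfW[OF M])
    then show "inverse (c N) - inverse \<alpha> = bN (l + N * d) - \<beta>"
      unfolding bN_def \<beta>_def by (simp add: inverse_divide)
  qed
  have smk: "small (\<lambda>N. bN (l + N * d) ^ (2 ^ k) - \<beta> ^ (2 ^ k))" for k
  proof -
    have "small (\<lambda>N. (bN (l + N * d) - \<beta>) ^ (2 ^ k))" by (rule small_pow[OF smb]) simp
    then show ?thesis by (simp add: frob_pow)
  qed
  obtain B where B: "\<forall>k<d. B k \<in> K" "V d = (\<lambda>r. \<Sum>k<d. B k * V k r)"
    using relation_exists[OF K, of V d w] V_K V_0 by auto
  define A where "A = cc d - (\<Sum>k<d. B k * cc k)"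
  have AK: "A \<in> K" unfolding A_def
    using B(1) by (intro sf_diff[OF K] sf_sum[OF K] sf_mult[OF K] cc_K) auto
  define F where "F N = bN (l + N * d) ^ (2 ^ d) - (\<Sum>k<d. B k * bN (l + N * d) ^ (2 ^ k))" for N
  define T where "T = \<beta> ^ (2 ^ d) - (\<Sum>k<d. B k * \<beta> ^ (2 ^ k))"
  have FA: "small (\<lambda>N. F N - A)"
  proof -
    have eq: "F N - A = EE d N - (\<Sum>k<d. B k * EE k N)" for N
    proof -
      define X where "X k = (\<Sum>r<d. V k r * S r N)" for k
      have BX: "(\<Sum>k<d. B k * X k) = X d"
      proof -
        have "(\<Sum>k<d. B k * X k) = (\<Sum>k<d. \<Sum>r<d. B k * V k r * S r N)"
          unfolding X_def by (simp add: sum_distrib_left mult.assoc)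
        also have "\<dots> = (\<Sum>r<d. \<Sum>k<d. B k * V k r * S r N)" by (rule sum.swap)
        also have "\<dots> = (\<Sum>r<d. (\<Sum>k<d. B k * V k r) * S r N)" by (simp add: sum_distrib_right)
        also have "\<dots> = X d" unfolding X_def B(2) ..
        finally show ?thesis .
      qed
      have "F N = (cc d + X d + EE d N) - (\<Sum>k<d. B k * (cc k + X k + EE k N))"
        unfolding F_def X_def coord ..
      also have "(\<Sum>k<d. B k * (cc k + X k + EE k N)) = (\<Sum>k<d. B k * cc k) + (\<Sum>k<d. B k * X k) + (\<Sum>k<d. B k * EE k N)"
        by (simp add: distrib_left sum.distrib)
      finally show ?thesis unfolding A_def BX by (simp add: algebra_simps)
    qed
    have "small (\<lambda>N. EE d N - (\<Sum>k<d. B k * EE k N))"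
      by (intro small_diff EE_small small_sum small_cmult)
    then show ?thesis unfolding eq .
  qed
  have FT: "small (\<lambda>N. F N - T)"
  proof -
    have eq: "F N - T = (bN (l + N * d) ^ (2 ^ d) - \<beta> ^ (2 ^ d))
        - (\<Sum>k<d. B k * (bN (l + N * d) ^ (2 ^ k) - \<beta> ^ (2 ^ k)))" for N
    proof -
      have "(\<Sum>k<d. B k * (bN (l + N * d) ^ (2 ^ k) - \<beta> ^ (2 ^ k)))
          = (\<Sum>k<d. B k * bN (l + N * d) ^ (2 ^ k)) - (\<Sum>k<d. B k * \<beta> ^ (2 ^ k))"
        by (simp only: right_diff_distrib sum_subtractf)
      then show ?thesis unfolding F_def T_def by (simp add: algebra_simps)
    qed
    have "small (\<lambda>N. (bN (l + N * d) ^ (2 ^ d) - \<beta> ^ (2 ^ d))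
        - (\<Sum>k<d. B k * (bN (l + N * d) ^ (2 ^ k) - \<beta> ^ (2 ^ k))))"
      by (intro small_diff smk small_sum small_cmult)
    then show ?thesis unfolding eq .
  qed
  have "small (\<lambda>N. (F N - A) - (F N - T))" by (rule small_diff[OF FA FT])
  then have "small (\<lambda>N. T - A)" by simp
  then have "T - A = 0" by (rule small_const)
  then have "\<beta> ^ (2 ^ d) = A + (\<Sum>k<d. B k * \<beta> ^ (2 ^ k))" unfolding T_def by (simp add: algebra_simps)
  then show ?thesis using anz AK B(1) unfolding \<beta>_def by blast
qed

end

theorem mainTheorem1:
  fixes l d :: nat and eps :: "nat \<Rightarrow> bit poly" and \<alpha> :: "bit fls"
  assumes d_pos: "d \<ge> 1"
    and nonconst: "\<And>n. degree (eps n) > 0"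
    and periodic: "\<And>n. n \<ge> l \<Longrightarrow> eps (n + d) = eps n"
    and alpha: "is_CF \<alpha> (\<lambda>i. laurent_of_poly (sword eps i))"
  shows "(\<exists>P :: bit fls poly.
            (\<forall>i. coeff P i \<in> gen_subfield (laurent_of_poly ` eps ` {..<l + d}))
            \<and> degree P = 2 ^ d \<and> poly P \<alpha> = 0)
       \<and> (\<exists>A B. A \<in> gen_subfield (laurent_of_poly ` eps ` {..<l + d})
            \<and> (\<forall>k<d. B k \<in> gen_subfield (laurent_of_poly ` eps ` {..<l + d}))
            \<and> (inverse \<alpha>) ^ (2 ^ d) = A + (\<Sum>k<d. B k * (inverse \<alpha>) ^ (2 ^ k)))"
proof -
  interpret cfs l d eps using d_pos nonconst periodic by unfold_locales auto
  define KK where "KK = gen_subfield (laurent_of_poly ` eps ` {..<l + d})"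
  have KK: "KK = K" unfolding KK_def K_def ..
  obtain A B where anz: "\<alpha> \<noteq> 0" and AK: "A \<in> K" and BK: "\<forall>k<d. B k \<in> K"
    and rel: "inverse \<alpha> ^ (2 ^ d) = A + (\<Sum>k<d. B k * inverse \<alpha> ^ (2 ^ k))"
    using main_rel[OF alpha] by blast
  have lt: "(2::nat) ^ k < 2 ^ d" if "k < d" for k
    using that by (rule power_strict_increasing) simp
  define Q where "Q = monom A (2 ^ d) + (\<Sum>k<d. monom (B k) (2 ^ d - 2 ^ k)) - 1"
  have cQ: "coeff Q i = (if 2 ^ d = i then A else 0) + (\<Sum>k<d. if 2 ^ d - 2 ^ k = i then B k else 0)
             - of_bool (i = 0)" for i
    unfolding Q_def by (simp add: coeff_sum)
  have QK: "coeff Q i \<in> K" for i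
    unfolding cQ using AK BK
    by (intro sf_diff[OF K] sf_add[OF K] sf_sum[OF K]) (auto simp: sf_0[OF K] sf_1[OF K])
  have "(\<Sum>k<d. if 2 ^ d - 2 ^ k = (0::nat) then B k else 0) = 0"
    by (rule sum.neutral) (use lt in force)
  then have Q0: "coeff Q 0 = - 1" unfolding cQ by simp
  have Qnz: "Q \<noteq> 0"
  proof
    assume "Q = 0"
    then have "coeff Q 0 = 0" by simp
    then show False unfolding Q0 by simp
  qed
  have Qdeg: "degree Q \<le> 2 ^ d"
  proof (rule degree_le, intro allI impI)
    fix i :: nat assume i: "2 ^ d < i"
    have "(\<Sum>k<d. if 2 ^ d - 2 ^ k = i then B k else 0) = 0"
      by (rule sum.neutral) (use i in force)
    then show "coeff Q i = 0" unfolding cQ using i by simp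
  qed
  define \<beta> where "\<beta> = inverse \<alpha>"
  have ab: "\<alpha> * \<beta> = 1" unfolding \<beta>_def using anz by simp
  have pk: "\<alpha> ^ (2 ^ d) * \<beta> ^ (2 ^ k) = \<alpha> ^ (2 ^ d - 2 ^ k)" if "k < d" for k
  proof -
    have "2 ^ d - 2 ^ k + 2 ^ k = (2::nat) ^ d" using lt[OF that] by simp
    then have "\<alpha> ^ (2 ^ d) = \<alpha> ^ (2 ^ d - 2 ^ k) * \<alpha> ^ (2 ^ k)" by (metis power_add)
    then have "\<alpha> ^ (2 ^ d) * \<beta> ^ (2 ^ k) = \<alpha> ^ (2 ^ d - 2 ^ k) * (\<alpha> * \<beta>) ^ (2 ^ k)"
      by (simp add: power_mult_distrib mult.assoc)
    then show ?thesis unfolding ab by simp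
  qed
  have "1 = (\<alpha> * \<beta>) ^ (2 ^ d)" unfolding ab by simp
  also have "\<dots> = \<alpha> ^ (2 ^ d) * (A + (\<Sum>k<d. B k * \<beta> ^ (2 ^ k)))"
    unfolding power_mult_distrib \<beta>_def rel ..
  also have "\<dots> = A * \<alpha> ^ (2 ^ d) + (\<Sum>k<d. B k * (\<alpha> ^ (2 ^ d) * \<beta> ^ (2 ^ k)))"
    by (simp add: distrib_left sum_distrib_left algebra_simps)
  also have "(\<Sum>k<d. B k * (\<alpha> ^ (2 ^ d) * \<beta> ^ (2 ^ k))) = (\<Sum>k<d. B k * \<alpha> ^ (2 ^ d - 2 ^ k))"
    by (intro sum.cong refl) (simp add: pk)
  finally have one: "1 = A * \<alpha> ^ (2 ^ d) + (\<Sum>k<d. B k * \<alpha> ^ (2 ^ d - 2 ^ k))" .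
  have pQ: "poly Q \<alpha> = 0"
    unfolding Q_def by (simp add: poly_sum poly_monom one[symmetric])
  define P where "P = monom 1 (2 ^ d - degree Q) * Q"
  have "degree P = (2 ^ d - degree Q) + degree Q"
    unfolding P_def by (subst degree_mult_eq) (use Qnz in \<open>auto simp: degree_monom_eq\<close>)
  then have Pdeg: "degree P = 2 ^ d" using Qdeg by simp
  have Ppoly: "poly P \<alpha> = 0" unfolding P_def by (simp add: pQ)
  have PK: "coeff P i \<in> K" for i
    unfolding P_def coeff_monom_mult using QK by (auto simp: sf_0[OF K])
  show ?thesis
    using PK Pdeg Ppoly AK BK rel unfolding KK[unfolded KK_def] by blast
qed


end
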